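(* Let $h:(0,\infty)\to[0,\infty)$ be such that there exist $C\ge1$ and $\beta>0$ with $h(s)+C\ge\frac{1}{C}\min\left(1,\frac{t^{\beta}}{s^{\beta}}\right)h(t)$ for all $t,s\in(0,\infty)$. Then there exists $A\ge1$ such that for every $x\in(0,\infty)$, $H(x)\le h(x)\le AH(x)+A$, where $H$ is the largest convex minorant of $h$.
   Context: The largest convex minorant $H$ of $h$ is the largest convex function on $(0,\infty)$ with $H\le h$. *)

theory Defs
  imports "HOL-Analysis.Analysis"
begin

definition largest_convex_minorant :: "(real \<Rightarrow> real) \<Rightarrow> (real \<Rightarrow> real) \<Rightarrow> bool" where
  "largest_convex_minorant h H \<longleftrightarrow>
     convex_on {0<..} H \<and> (\<forall>x>0. H x \<le> h x) \<and>
     (\<forall>g. convex_on {0<..} g \<and> (\<forall>x>0. g x \<le> h x) \<longrightarrow> (\<forall>x>0. g x \<le> H x))"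

end

theory Submission
  imports Defs
begin

lemma convex_max_affine:
  fixes a b :: real
  assumes cS: "convex S"
  shows "convex_on S (\<lambda>x. max 0 (a + b * x))"
proof (rule convex_onI)
  fix t x y :: real assume t: "0 < t" "t < 1"
  have "a + b * ((1 - t) * x + t * y) = (1 - t) * (a + b*x) + t * (a + b*y)"
    by (simp add: algebra_simps)
  moreover have "(1 - t) * (a + b*x) \<le> (1 - t) * max 0 (a + b*x)"
    using t by (intro mult_left_mono) auto
  moreover have "t * (a + b*y) \<le> t * max 0 (a + b*y)"
    using t by (intro mult_left_mono) auto
  moreover have "0 \<le> (1 - t) * max 0 (a + b*x) + t * max 0 (a + b*y)"
    using t by simp
  ultimately show "max 0 (a + b * ((1 - t) *\<^sub>R x + t *\<^sub>R y))
      \<le> (1 - t) * max 0 (a + b*x) + t * max 0 (a + b*y)"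
    by simp
qed (fact cS)

theorem proposition2p24:
  fixes h H :: "real \<Rightarrow> real"
  assumes h_nonneg: "\<And>x. x > 0 \<Longrightarrow> h x \<ge> 0"
    and C: "C \<ge> 1" and beta: "\<beta> > 0"
    and hyp: "\<And>t s. t > 0 \<Longrightarrow> s > 0 \<Longrightarrow>
               h s + C \<ge> (1 / C) * min 1 (t powr \<beta> / s powr \<beta>) * h t"
    and H: "largest_convex_minorant h H"
  shows "\<exists>A\<ge>1. \<forall>x>0. H x \<le> h x \<and> h x \<le> A * H x + A"
proof -
  have Hconv: "convex_on {0<..} H" and Hle: "\<And>x. x > 0 \<Longrightarrow> H x \<le> h x"
    and Hmax: "\<And>g x. convex_on {0<..} g \<Longrightarrow> (\<forall>x>0. g x \<le> h x) \<Longrightarrow> x > 0 \<Longrightarrow> g x \<le> H x"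
    using H unfolding largest_convex_minorant_def by blast+
  have H0: "0 \<le> H x" if "x > 0" for x
    using Hmax[of "\<lambda>_. 0" x] that h_nonneg by (simp add: convex_on_const)
  define K where "K = 2 powr \<beta>"
  have K1: "K \<ge> 1" unfolding K_def using beta by (intro ge_one_powr_ge_zero) auto
  have main: "h x0 \<le> 2*K*C * H x0 + 2*K*C^2" if x0: "x0 > 0" for x0
  proof -
    define g where "g x = (h x0 / C) * max 0 (1/K + (-1/(2*K*x0)) * x) - C" for x
    have gconv: "convex_on {0<..} g"
      unfolding g_def
      by (intro convex_on_diff convex_on_cmul convex_max_affine)
         (use C h_nonneg x0 in \<open>auto simp: concave_on_const\<close>)
    have gle: "\<forall>x>0. g x \<le> h x"
    proof (intro allI impI)
      fix x :: real assume x: "x > 0"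
      let ?p = "max 0 (1/K + (-1/(2*K*x0)) * x)"
      have pm: "?p \<le> min 1 (x0 powr \<beta> / x powr \<beta>)"
      proof (cases "x \<le> 2 * x0")
        case True
        have "?p \<le> 1/K" using x x0 K1 by (auto simp: field_simps)
        moreover have "1/K \<le> 1" using K1 by simp
        moreover have "1/K \<le> x0 powr \<beta> / x powr \<beta>"
        proof -
          have "x powr \<beta> \<le> (2*x0) powr \<beta>" using True x beta by (intro powr_mono2) auto
          also have "\<dots> = K * x0 powr \<beta>" unfolding K_def using x0 by (simp add: powr_mult)
          finally show ?thesis using K1 x x0 by (simp add: field_simps)
        qed
        ultimately show ?thesis by simp
      next
        case False
        then have "?p = 0" using x0 K1 by (auto simp: field_simps)
        then show ?thesis using x x0 by simp
      qed
      have "(h x0 / C) * ?p \<le> (h x0 / C) * min 1 (x0 powr \<beta> / x powr \<beta>)"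
        using h_nonneg[OF x0] C by (intro mult_left_mono[OF pm]) auto
      also have "\<dots> = (1 / C) * min 1 (x0 powr \<beta> / x powr \<beta>) * h x0"
        by (simp only: divide_inverse mult_ac)
      also have "\<dots> \<le> h x + C" using hyp[OF x0 x] .
      finally show "g x \<le> h x" unfolding g_def by simp
    qed
    have "g x0 \<le> H x0" using Hmax[OF gconv gle x0] .
    moreover have "g x0 = h x0 / (2*K*C) - C"
      unfolding g_def using x0 K1 C by (simp add: field_simps)
    ultimately have "h x0 / (2*K*C) \<le> H x0 + C" by simp
    then have "h x0 \<le> 2*K*C * (H x0 + C)" using K1 C by (simp add: field_simps)
    then show ?thesis by (simp add: algebra_simps power2_eq_square)
  qed
  show ?thesis
  proof (intro exI[of _ "2*K*C^2"] conjI allI impI)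
    have "1 \<le> C^2" using C by simp
    then have "1*1 \<le> K*C^2" using K1 by (intro mult_mono) auto
    then show "1 \<le> 2*K*C^2" by simp
  next
    fix x :: real assume x: "x > 0"
    show "H x \<le> h x" using Hle[OF x] .
    have "2*K*C * H x \<le> 2*K*C^2 * H x"
      using H0[OF x] C K1 by (intro mult_right_mono) (auto simp: power2_eq_square)
    then show "h x \<le> 2*K*C^2 * H x + 2*K*C^2" using main[OF x] by simp
  qed
qed

end
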